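(* Let $(V,Y,\mathbf 1,\omega)$ be a vertex operator algebra. For $v\in V$ define $X(v,x)=Y(x^{L(0)}v,x)$ (so $X(v,x)=x^{\mathrm{wt}\,v}Y(v,x)$ for homogeneous $v$), and for $u\in V$ define Zhu's operator $Y[u,y]=Y(e^{yL(0)}u,\,e^{y}-1)$. Let $\delta(x)=\sum_{n\in\mathbb Z}x^n$ and let $$y_{21}=\log\Big(1-\frac{x_2}{x_1}\Big),\quad y_{12}=\log\Big(1-\frac{x_1}{x_2}\Big),\quad y_{01}=\log\Big(1-\frac{x_0}{x_1}\Big),$$ each understood as the formal series $\log(1-z)=-\sum_{k\ge1}z^k/k$. Then for all $u,v\in V$, $$x_0^{-1}\delta\Big(e^{y_{21}}\frac{x_1}{x_0}\Big)X(u,x_1)X(v,x_2)-x_0^{-1}\delta\Big(-e^{y_{12}}\frac{x_2}{x_0}\Big)X(v,x_2)X(u,x_1)=x_2^{-1}\delta\Big(e^{y_{01}}\frac{x_1}{x_2}\Big)X\big(Y[u,-y_{01}]v,\,x_2\big).$$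
   Context: A vertex operator algebra $(V,Y,\mathbf 1,\omega)$ over $\mathbb C$ is a $\mathbb Z$-graded vector space $V=\coprod_{n\in\mathbb Z}V_{(n)}$ (for $v\in V_{(n)}$, $\mathrm{wt}\,v=n$) with $\dim V_{(n)}<\infty$ and $V_{(n)}=0$ for $n$ sufficiently small, equipped with a linear map $v\mapsto Y(v,x)=\sum_{n\in\mathbb Z}v_nx^{-n-1}\in(\mathrm{End}\,V)[[x,x^{-1}]]$ and vectors $\mathbf 1\in V_{(0)}$, $\omega\in V_{(2)}$, such that for $u,v\in V$: $u_nv=0$ for $n$ sufficiently large; $Y(\mathbf 1,x)=1$; $Y(v,x)\mathbf 1\in V[[x]]$ with constant term $v$; the Jacobi identity $x_0^{-1}\delta\big(\frac{x_1-x_2}{x_0}\big)Y(u,x_1)Y(v,x_2)-x_0^{-1}\delta\big(\frac{x_2-x_1}{-x_0}\big)Y(v,x_2)Y(u,x_1)=x_2^{-1}\delta\big(\frac{x_1-x_0}{x_2}\big)Y(Y(u,x_0)v,x_2)$ holds, where binomial expressions are expanded in nonnegative powers of the second variable; writing $Y(\omega,x)=\sum_n L(n)x^{-n-2}$, the operators $L(n)$ satisfy $[L(m),L(n)]=(m-n)L(m+n)+\frac1{12}(m^3-m)\delta_{m+n,0}c$ for a constant $c\in\mathbb C$ (the rank); $L(0)v=(\mathrm{wt}\,v)v$ for homogeneous $v$; and $\frac{d}{dx}Y(v,x)=Y(L(-1)v,x)$. Here all variables $x_0,x_1,x_2,y$ are commuting formal variables; $e^{y}$ and $e^{yL(0)}$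 are formal exponential series; $Y(\cdot,x_2)$ and $X(\cdot,x_2)$ are extended linearly to formal series with coefficients in $V$; and expressions such as $e^{y_{21}}$, $e^{-y_{01}}$ are the corresponding formal series (e.g. $e^{y_{21}}=1-x_2/x_1$). *)

theory Defs
  imports Complex_Main "HOL-Library.Groups_Big_Fun"
    "HOL-Computational_Algebra.Formal_Laurent_Series"
begin

unbundle fps_syntax

text \<open>
  Y u n w denotes the mode u_n w, i.e. Y(u,x) = sum_n (Y u n) x^(-n-1).
  Formal series in x0, x1, x2 (with values in V, or scalar valued) are represented
  by their coefficient functions: f (a,b,c) is the coefficient of x0^a x1^b x2^c.
  An identity of End(V)-valued formal series is stated coefficientwise after
  applying both sides to an arbitrary vector w.
\<close>

definition is_grading :: "(complex \<Rightarrow> 'v::ab_group_add \<Rightarrow> 'v) \<Rightarrow> (int \<Rightarrow> 'v set) \<Rightarrow> bool" where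
  "is_grading sc gr \<longleftrightarrow>
     (\<forall>n. module.subspace sc (gr n) \<and> (\<exists>B. finite B \<and> gr n \<subseteq> module.span sc B))
   \<and> (\<exists>N. \<forall>n<N. gr n = {0})
   \<and> (\<forall>v. \<exists>!p. finite {n. p n \<noteq> 0} \<and> (\<forall>n. p n \<in> gr n) \<and> v = Sum_any p)"

definition gcomp :: "(int \<Rightarrow> 'v::ab_group_add set) \<Rightarrow> 'v \<Rightarrow> int \<Rightarrow> 'v" where
  "gcomp gr v = (THE p. finite {n. p n \<noteq> 0} \<and> (\<forall>n. p n \<in> gr n) \<and> v = Sum_any p)"

definition smul3 :: "(complex \<Rightarrow> 'v::ab_group_add \<Rightarrow> 'v) \<Rightarrow> (int \<times> int \<times> int \<Rightarrow> complex)
    \<Rightarrow> (int \<times> int \<times> int \<Rightarrow> 'v) \<Rightarrow> int \<times> int \<times> int \<Rightarrow> 'v" where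
  "smul3 sc f g = (\<lambda>(a,b,c). Sum_any (\<lambda>(p,q,r). sc (f (p,q,r)) (g (a-p, b-q, c-r))))"

text \<open>Standard delta-function expressions of the Jacobi identity, binomial expansions
  in nonnegative powers of the second variable.\<close>

text \<open>x0^-1 delta((x1-x2)/x0) = sum_n x0^(-n-1) (x1-x2)^n\<close>
definition deltaJ1 :: "int \<times> int \<times> int \<Rightarrow> complex" where
  "deltaJ1 = (\<lambda>(a,b,c). if c \<ge> 0 \<and> a + b + c = -1
      then (-1)^nat c * (of_int (-a-1) gchoose nat c) else 0)"

text \<open>x0^-1 delta((x2-x1)/(-x0)) = sum_n (-1)^n x0^(-n-1) (x2-x1)^n\<close>
definition deltaJ2 :: "int \<times> int \<times> int \<Rightarrow> complex" where
  "deltaJ2 = (\<lambda>(a,b,c). if b \<ge> 0 \<and> a + b + c = -1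
      then (-1) powi (-a-1) * (-1)^nat b * (of_int (-a-1) gchoose nat b) else 0)"

text \<open>x2^-1 delta((x1-x0)/x2) = sum_n x2^(-n-1) (x1-x0)^n\<close>
definition deltaJ3 :: "int \<times> int \<times> int \<Rightarrow> complex" where
  "deltaJ3 = (\<lambda>(a,b,c). if a \<ge> 0 \<and> a + b + c = -1
      then (-1)^nat a * (of_int (-c-1) gchoose nat a) else 0)"

definition jacobi_identity :: "(complex \<Rightarrow> 'v::ab_group_add \<Rightarrow> 'v) \<Rightarrow> ('v \<Rightarrow> int \<Rightarrow> 'v \<Rightarrow> 'v) \<Rightarrow> bool" where
  "jacobi_identity sc Y \<longleftrightarrow> (\<forall>u v w abc.
      smul3 sc deltaJ1 (\<lambda>(i,j,l). if i = 0 then Y u (-j-1) (Y v (-l-1) w) else 0) abc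
    - smul3 sc deltaJ2 (\<lambda>(i,j,l). if i = 0 then Y v (-l-1) (Y u (-j-1) w) else 0) abc
    = smul3 sc deltaJ3 (\<lambda>(i,j,l). if j = 0 then Y (Y u (-i-1) v) (-l-1) w else 0) abc)"

definition VOA :: "(complex \<Rightarrow> 'v::ab_group_add \<Rightarrow> 'v) \<Rightarrow> (int \<Rightarrow> 'v set) \<Rightarrow>
    ('v \<Rightarrow> int \<Rightarrow> 'v \<Rightarrow> 'v) \<Rightarrow> 'v \<Rightarrow> 'v \<Rightarrow> complex \<Rightarrow> bool" where
  "VOA sc gr Y one omega crank \<longleftrightarrow>
     vector_space sc \<and> is_grading sc gr
   \<and> (\<forall>u n. module_hom sc sc (Y u n)) \<and> (\<forall>n w. module_hom sc sc (\<lambda>u. Y u n w))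
   \<and> one \<in> gr 0 \<and> omega \<in> gr 2
   \<and> (\<forall>u v. \<exists>N. \<forall>n\<ge>N. Y u n v = 0)
   \<and> (\<forall>n v. Y one n v = (if n = -1 then v else 0))
   \<and> (\<forall>v n. n \<ge> 0 \<longrightarrow> Y v n one = 0) \<and> (\<forall>v. Y v (-1) one = v)
   \<and> jacobi_identity sc Y
   \<and> (\<forall>m n w. Y omega (m+1) (Y omega (n+1) w) - Y omega (n+1) (Y omega (m+1) w)
         = sc (of_int (m-n)) (Y omega (m+n+1) w)
           + (if m + n = 0 then sc (of_int (m^3 - m) / 12 * crank) w else 0))
   \<and> (\<forall>n v. v \<in> gr n \<longrightarrow> Y omega 1 v = sc (of_int n) v)
   \<and> (\<forall>v n w. Y (Y omega 0 v) n w = sc (of_int (-n)) (Y v (n-1) w))"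

text \<open>Here L(n) = Y omega (n+1); the last clause is d/dx Y(v,x) = Y(L(-1)v,x) coefficientwise.\<close>

text \<open>Coefficient of x^j in X(v,x) = Y(x^L(0) v, x) = sum_n x^n Y(v_(n),x), applied to w.\<close>
definition Xcoeff :: "(int \<Rightarrow> 'v::ab_group_add set) \<Rightarrow> ('v \<Rightarrow> int \<Rightarrow> 'v \<Rightarrow> 'v) \<Rightarrow> 'v \<Rightarrow> int \<Rightarrow> 'v \<Rightarrow> 'v" where
  "Xcoeff gr Y v j w = Sum_any (\<lambda>n. Y (gcomp gr v n) (n - j - 1) w)"

definition log1m :: "complex fps" where
  "log1m = Abs_fps (\<lambda>k. if k = 0 then 0 else - 1 / of_nat k)"

definition fexp :: "complex fps \<Rightarrow> complex fls" where
  "fexp y = fps_to_fls (fps_exp 1 oo y)"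

text \<open>y21 = log(1-x2/x1), y12 = log(1-x1/x2), y01 = log(1-x0/x1): each is log1m in the
  respective ratio variable.  Coefficients of x0^-1 delta(e^y21 x1/x0),
  x0^-1 delta(-e^y12 x2/x0) and x2^-1 delta(e^y01 x1/x2), with delta(z) = sum_n z^n.\<close>
definition deltaA :: "int \<times> int \<times> int \<Rightarrow> complex" where
  "deltaA = (\<lambda>(a,b,c). if b + c = -a-1 then (fexp log1m powi (-a-1)) $$ c else 0)"

definition deltaB :: "int \<times> int \<times> int \<Rightarrow> complex" where
  "deltaB = (\<lambda>(a,b,c). if b + c = -a-1 then ((- fexp log1m) powi (-a-1)) $$ b else 0)"

definition deltaC :: "int \<times> int \<times> int \<Rightarrow> complex" where
  "deltaC = (\<lambda>(a,b,c). if a + b = -c-1 then (fexp log1m powi (-c-1)) $$ a else 0)"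

text \<open>Zhu's operator Y[u,y]v = Y(e^(y L(0)) u, e^y - 1) v = sum_(n,m) e^(n y) (e^y - 1)^(-m-1) (u_(n))_m v
  with y := -y01; coefficient of (x0/x1)^k.\<close>
definition zhuY_my01 :: "(complex \<Rightarrow> 'v::ab_group_add \<Rightarrow> 'v) \<Rightarrow> (int \<Rightarrow> 'v set) \<Rightarrow>
    ('v \<Rightarrow> int \<Rightarrow> 'v \<Rightarrow> 'v) \<Rightarrow> 'v \<Rightarrow> 'v \<Rightarrow> int \<Rightarrow> 'v" where
  "zhuY_my01 sc gr Y u v k = Sum_any (\<lambda>(n,m).
      sc ((fexp (fps_const (of_int n) * (- log1m)) * (fexp (- log1m) - 1) powi (-m-1)) $$ k)
         (Y (gcomp gr u n) m v))"

end

theory Submission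
  imports Defs
begin


definition Bc :: "complex \<Rightarrow> complex fps" where
  "Bc a = Abs_fps (\<lambda>n. (-1)^n * (a gchoose n))"

lemma Bc_nth: "Bc a $ n = (-1)^n * (a gchoose n)"
  by (simp add: Bc_def)

lemma Bc_add: "Bc (a + b) = Bc a * Bc b"
proof (rule fps_ext)
  fix n
  have "(Bc a * Bc b) $ n = (\<Sum>i=0..n. (-1)^n * ((a gchoose i) * (b gchoose (n - i))))"
    unfolding fps_mult_nth Bc_nth
    by (rule sum.cong) (auto simp: power_add[symmetric])
  also have "\<dots> = (-1)^n * (\<Sum>i=0..n. (a gchoose i) * (b gchoose (n - i)))"
    by (simp add: sum_distrib_left)
  also have "\<dots> = Bc (a+b) $ n" by (simp add: gbinomial_Vandermonde Bc_nth)
  finally show "Bc (a + b) $ n = (Bc a * Bc b) $ n" by simp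
qed

lemma Bc_0: "Bc 0 = 1"
  by (rule fps_ext) (simp add: Bc_nth gbinomial_0_left)

lemma Bc_1: "Bc 1 = 1 - fps_X"
proof (rule fps_ext)
  fix n
  have "(1::complex) gchoose n = of_nat (1 choose n)" by (metis binomial_gbinomial of_nat_1)
  then show "Bc 1 $ n = (1 - fps_X) $ n"
    by (cases n) (auto simp: Bc_nth fps_X_def binomial_eq_0)
qed

lemma Bc_m1: "Bc (-1) - 1 = fps_X * Bc (-1)"
proof (rule fps_ext)
  fix n
  have e: "Bc (-1) $ k = 1" for k
  proof -
    have "(of_nat k::complex) gchoose k = 1" by (metis binomial_gbinomial binomial_n_n of_nat_1)
    then have "((-1)::complex) gchoose k = (-1)^k" using gbinomial_minus[of "1::complex" k] by simp
    then show ?thesis by (simp add: Bc_nth flip: power_mult_distrib)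
  qed
  show "(Bc (-1) - 1) $ n = (fps_X * Bc (-1)) $ n"
    by (cases n) (simp_all add: e fps_X_mult_nth e)
qed

lemma Bc_inv: "Bc a * Bc (-a) = 1"
  by (simp flip: Bc_add add: Bc_0)

lemma Bc_nat_pow: "Bc a ^ k = Bc (of_nat k * a)"
  by (induction k) (simp_all add: Bc_0 Bc_add[symmetric] algebra_simps)

lemma Bc_fls_powi: "fps_to_fls (Bc a) powi k = fps_to_fls (Bc (of_int k * a))"
proof (cases "k \<ge> 0")
  case True
  then show ?thesis
    by (simp add: power_int_def fps_to_fls_power[symmetric] Bc_nat_pow)
next
  case False
  let ?j = "nat (-k)"
  have "fps_to_fls (Bc a) powi k = inverse (fps_to_fls (Bc a) ^ ?j)"
    using False by (simp add: power_int_def power_inverse)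
  also have "\<dots> = inverse (fps_to_fls (Bc (of_nat ?j * a)))"
    by (simp add: fps_to_fls_power[symmetric] Bc_nat_pow)
  also have "\<dots> = fps_to_fls (Bc (- (of_nat ?j * a)))"
    by (rule inverse_unique) (simp add: fls_times_fps_to_fls[symmetric] Bc_inv)
  also have "- (of_nat ?j * a) = of_int k * a" using False by simp
  finally show ?thesis .
qed

lemma log1m_eq: "log1m = fps_ln 1 oo (- fps_X)"
  by (simp add: log1m_def fps_compose_uminus' fps_ln_nth fps_eq_iff power_minus_mult[symmetric])

lemma log1m_0: "log1m $ 0 = 0" by (simp add: log1m_def)

lemma exp_ln1: "fps_exp (1::complex) oo fps_ln 1 = 1 + fps_X"
proof -
  have "fps_exp (1::complex) oo fps_ln 1 = ((fps_exp 1 - 1) + 1) oo fps_ln 1" by simp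
  also have "\<dots> = ((fps_exp 1 - 1) oo fps_inv (fps_exp 1 - 1)) + 1"
    by (simp only: fps_compose_add_distrib fps_ln_fps_exp_inv[of 1, simplified]) simp
  also have "\<dots> = fps_X + 1" by (subst fps_inv_right) auto
  finally show ?thesis by simp
qed

lemma exp_log1m: "fps_exp (1::complex) oo log1m = 1 - fps_X"
proof -
  have "fps_exp (1::complex) oo log1m = (fps_exp 1 oo fps_ln 1) oo (- fps_X)"
    unfolding log1m_eq by (rule fps_compose_assoc) auto
  also have "\<dots> = 1 - fps_X"
    by (simp add: exp_ln1 fps_compose_add_distrib fps_compose_uminus)
  finally show ?thesis .
qed

lemma exp_scale_compose: "fps_exp (1::complex) oo (fps_const c * y) = fps_exp c oo y"
proof (rule fps_ext)
  fix n
  show "(fps_exp 1 oo (fps_const c * y)) $ n = (fps_exp c oo y) $ n"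
    unfolding fps_compose_nth
    by (rule sum.cong) (simp_all only: power_mult_distrib fps_const_power[symmetric]
        fps_mult_left_const_nth fps_exp_nth power_one, simp)
qed

lemma exp_int_log1m: "fps_exp (of_int k :: complex) oo log1m = Bc (of_int k)"
proof (cases "k \<ge> 0")
  case True
  have "fps_exp (of_int k :: complex) = fps_exp 1 ^ nat k"
    using True by (simp add: fps_exp_power_mult)
  then show ?thesis using True
    by (simp add: fps_compose_power[symmetric] log1m_0 exp_log1m Bc_1[symmetric] Bc_nat_pow)
next
  case False
  have "fps_exp (of_int k :: complex) = inverse (fps_exp 1 ^ nat (-k))"
    using False by (simp add: fps_exp_power_mult flip: fps_exp_neg)
  then have "fps_exp (of_int k :: complex) oo log1m = inverse (Bc (of_nat (nat (-k))))"
    by (simp add: fps_inverse_compose log1m_0 fps_compose_power[symmetric] exp_log1m Bc_1[symmetric] Bc_nat_pow)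
  also have "\<dots> = Bc (- of_nat (nat (-k)))"
    by (rule fps_inverse_unique) (simp add: Bc_inv)
  finally show ?thesis using False by simp
qed

lemma fexp_log1m: "fexp log1m = fps_to_fls (Bc 1)"
  by (simp add: fexp_def exp_log1m Bc_1)

lemma fexp_lin: "fexp (fps_const c * (- log1m)) = fps_to_fls (Bc (- c))" if "c = of_int k"
proof -
  have "fps_const c * (- log1m) = fps_const (-c) * log1m" by (simp flip: fps_const_neg)
  then show ?thesis using that exp_int_log1m[of "-k"]
    by (simp add: fexp_def exp_scale_compose del: fps_const_neg)
qed

definition zc :: "int \<Rightarrow> int \<Rightarrow> complex" where
  "zc A K = (if K \<ge> 0 then (-1)^nat K * (of_int A gchoose nat K) else 0)"

lemma Bc_fls_nth: "fps_to_fls (Bc (of_int A)) $$ K = zc A K"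
  by (simp add: zc_def Bc_nth)

lemma fexp_log1m_powi: "fexp log1m powi N = fps_to_fls (Bc (of_int N))"
  by (simp add: fexp_log1m Bc_fls_powi)

lemma deltaA_eq: "deltaA = deltaJ1"
  by (auto simp: fun_eq_iff deltaA_def deltaJ1_def fexp_log1m_powi Bc_fls_nth zc_def Bc_nth)

lemma deltaC_eq: "deltaC = deltaJ3"
  by (auto simp: fun_eq_iff deltaC_def deltaJ3_def fexp_log1m_powi Bc_fls_nth zc_def Bc_nth)

lemma neg_powi_nth: "((- F) powi N) $$ b = (-1::complex) powi N * ((F powi N) $$ b)"
  for F :: "complex fls"
proof -
  have "- F = fls_const (-1) * F" by (simp add: fls_eq_iff)
  then have "(- F) powi N = (fls_const (-1) * F) powi N" by simp
  also have "\<dots> = fls_const (-1) powi N * F powi N" by (rule power_int_mult_distrib)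
  also have "\<dots> = fls_const ((-1) powi N) * F powi N" by (simp only: fls_const_power_int)
  finally have "(- F) powi N = fls_const ((-1) powi N) * F powi N" .
  then show ?thesis by simp
qed

lemma deltaB_eq: "deltaB = deltaJ2"
  by (auto simp: fun_eq_iff deltaB_def deltaJ2_def neg_powi_nth fexp_log1m_powi Bc_fls_nth zc_def Bc_nth)

lemma fexp_mlog: "fexp (- log1m) = fps_to_fls (Bc (-1))"
  using fexp_lin[of 1 1] by simp

lemma zhu_coef:
  "(fexp (fps_const (of_int n) * (- log1m)) * (fexp (- log1m) - 1) powi (-m-1)) $$ k
    = zc (m+1-n) (k+m+1)"
proof -
  have "fexp (- log1m) - 1 = fps_to_fls (Bc (-1) - 1)" by (simp add: fexp_mlog)
  also have "\<dots> = fps_to_fls fps_X * fps_to_fls (Bc (-1))" by (simp only: Bc_m1 fls_times_fps_to_fls)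
  finally have "fexp (- log1m) - 1 = fls_X * fps_to_fls (Bc (-1))" by simp
  then have "(fexp (- log1m) - 1) powi (-m-1) = fls_X_intpow (-m-1) * fps_to_fls (Bc (of_int (m+1)))"
    by (simp add: power_int_mult_distrib Bc_fls_powi add.commute)
  moreover have e1: "fexp (fps_const (of_int n) * (- log1m)) = fps_to_fls (Bc (- of_int n))"
    by (rule fexp_lin) simp
  ultimately have "fexp (fps_const (of_int n) * (- log1m)) * (fexp (- log1m) - 1) powi (-m-1)
     = fls_X_intpow (-m-1) * (fps_to_fls (Bc (- of_int n)) * fps_to_fls (Bc (of_int (m+1))))"
    by (simp only: mult.left_commute)
  also have "\<dots> = fls_X_intpow (-m-1) * fps_to_fls (Bc (of_int (m+1-n)))"
    by (simp only: fls_times_fps_to_fls[symmetric] Bc_add[symmetric]) (simp add: algebra_simps)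
  finally have "fexp (fps_const (of_int n) * (- log1m)) * (fexp (- log1m) - 1) powi (-m-1)
     = fls_X_intpow (-m-1) * fps_to_fls (Bc (of_int (m+1-n)))" .
  then show ?thesis by (simp only: fls_X_intpow_times_conv_shift fls_shift_nth) (simp add: zc_def Bc_nth algebra_simps)
qed

lemma zc_neg: "K < 0 \<Longrightarrow> zc A K = 0" by (simp add: zc_def)

lemma zc_conv: "K \<ge> 0 \<Longrightarrow> (\<Sum>p\<in>{0..K}. zc A p * zc B (K - p)) = zc (A + B) K"
proof -
  assume K: "K \<ge> 0"
  have "zc (A + B) K = (Bc (of_int A) * Bc (of_int B)) $ nat K"
    using K by (simp add: Bc_add[symmetric] zc_def Bc_nth)
  also have "\<dots> = (\<Sum>i=0..nat K. zc A (int i) * zc B (K - int i))"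
    unfolding fps_mult_nth using K
    by (intro sum.cong) (auto simp: zc_def Bc_nth nat_diff_distrib)
  also have "\<dots> = (\<Sum>p\<in>{0..K}. zc A p * zc B (K - p))"
    using K by (intro sum.reindex_bij_witness[of _ nat int]) auto
  finally show ?thesis by simp
qed




lemma Sum_any_sup: "finite S \<Longrightarrow> (\<And>x. x \<notin> S \<Longrightarrow> f x = 0) \<Longrightarrow> Sum_any f = sum f S"
  by (rule Sum_any.expand_superset) auto

lemma Sum_any_sum_swap:
  assumes "finite I" "\<And>i. i \<in> I \<Longrightarrow> finite {x. g i x \<noteq> 0}"
  shows "Sum_any (\<lambda>x. \<Sum>i\<in>I. g i x) = (\<Sum>i\<in>I. Sum_any (g i))"
proof -
  let ?S = "\<Union>i\<in>I. {x. g i x \<noteq> 0}"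
  have fS: "finite ?S" using assms by auto
  have "Sum_any (\<lambda>x. \<Sum>i\<in>I. g i x) = (\<Sum>x\<in>?S. \<Sum>i\<in>I. g i x)"
    by (rule Sum_any_sup[OF fS]) (auto intro!: sum.neutral)
  also have "\<dots> = (\<Sum>i\<in>I. \<Sum>x\<in>?S. g i x)" by (rule sum.swap)
  also have "\<dots> = (\<Sum>i\<in>I. Sum_any (g i))"
    by (intro sum.cong refl Sum_any_sup[OF fS, symmetric]) auto
  finally show ?thesis .
qed

definition g1 :: "('v \<Rightarrow> int \<Rightarrow> 'v \<Rightarrow> 'v) \<Rightarrow> 'v \<Rightarrow> 'v \<Rightarrow> 'v \<Rightarrow> int \<times> int \<times> int \<Rightarrow> 'v::ab_group_add" where
  "g1 Y x y w = (\<lambda>(i,j,l). if i = 0 then Y x (-j-1) (Y y (-l-1) w) else 0)"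
definition g2 :: "('v \<Rightarrow> int \<Rightarrow> 'v \<Rightarrow> 'v) \<Rightarrow> 'v \<Rightarrow> 'v \<Rightarrow> 'v \<Rightarrow> int \<times> int \<times> int \<Rightarrow> 'v::ab_group_add" where
  "g2 Y x y w = (\<lambda>(i,j,l). if i = 0 then Y y (-l-1) (Y x (-j-1) w) else 0)"
definition g3 :: "('v \<Rightarrow> int \<Rightarrow> 'v \<Rightarrow> 'v) \<Rightarrow> 'v \<Rightarrow> 'v \<Rightarrow> 'v \<Rightarrow> int \<times> int \<times> int \<Rightarrow> 'v::ab_group_add" where
  "g3 Y x y w = (\<lambda>(i,j,l). if j = 0 then Y (Y x (-i-1) y) (-l-1) w else 0)"

locale voa =
  fixes sc :: "complex \<Rightarrow> 'v::ab_group_add \<Rightarrow> 'v" and gr :: "int \<Rightarrow> 'v set"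
    and Y :: "'v \<Rightarrow> int \<Rightarrow> 'v \<Rightarrow> 'v" and one omega :: 'v and crank :: complex
  assumes V: "VOA sc gr Y one omega crank"
begin

lemma vs: "vector_space sc" using V by (simp add: VOA_def)

sublocale vector_space sc by (rule vs)

lemma grading: "is_grading sc gr" using V by (simp add: VOA_def)
lemma YL: "module_hom sc sc (Y u n)" using V by (simp add: VOA_def)
lemma YR: "module_hom sc sc (\<lambda>u. Y u n w)" using V by (simp add: VOA_def)

lemma YL_add: "Y u n (x + y) = Y u n x + Y u n y" by (rule module_hom.add[OF YL])
lemma YL_scale: "Y u n (sc c x) = sc c (Y u n x)" by (rule module_hom.scale[OF YL])
lemma YL_zero[simp]: "Y u n 0 = 0" by (rule module_hom.zero[OF YL])
lemma YL_sum: "Y u n (sum f S) = (\<Sum>i\<in>S. Y u n (f i))" by (rule module_hom.sum[OF YL])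
lemma YR_add: "Y (x + y) n w = Y x n w + Y y n w" using module_hom.add[OF YR] by blast
lemma YR_scale: "Y (sc c x) n w = sc c (Y x n w)" using module_hom.scale[OF YR] by blast
lemma YR_zero[simp]: "Y 0 n w = 0" using module_hom.zero[OF YR] by blast
lemma YR_sum: "Y (sum f S) n w = (\<Sum>i\<in>S. Y (f i) n w)" using module_hom.sum[OF YR] by blast

lemma trunc: "\<exists>N. \<forall>n\<ge>N. Y u n v = 0" using V by (simp add: VOA_def)

lemma gr_sub: "subspace (gr n)" using grading by (simp add: is_grading_def)
lemma gr_ex1: "\<exists>!p. finite {n. p n \<noteq> 0} \<and> (\<forall>n. p n \<in> gr n) \<and> v = Sum_any p"
  using grading by (simp add: is_grading_def)

lemma gcomp_props: "finite {n. gcomp gr v n \<noteq> 0}" "gcomp gr v n \<in> gr n" "v = Sum_any (gcomp gr v)"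
  using theI'[OF gr_ex1[of v]] unfolding gcomp_def by auto

lemma gcomp_unique:
  assumes "finite {n. p n \<noteq> 0}" "\<And>n. p n \<in> gr n" "v = Sum_any p"
  shows "gcomp gr v = p"
  unfolding gcomp_def using assms by (intro the1_equality[OF gr_ex1]) auto

lemma gcomp_sum:
  assumes I: "finite I" and x: "\<And>i. i \<in> I \<Longrightarrow> x i \<in> gr (d i)"
  shows "gcomp gr (sum x I) = (\<lambda>n. sum x {i\<in>I. d i = n})"
proof (rule gcomp_unique)
  show "finite {n. sum x {i\<in>I. d i = n} \<noteq> 0}"
    by (rule finite_subset[of _ "d ` I"]) (use I in \<open>auto intro: sum.neutral\<close>)
  show "sum x {i\<in>I. d i = n} \<in> gr n" for n
    by (rule subspace_sum[OF gr_sub]) (use x in auto)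
  have "Sum_any (\<lambda>n. sum x {i\<in>I. d i = n}) = (\<Sum>n\<in>d ` I. sum x {i\<in>I. d i = n})"
    by (rule Sum_any_sup) (use I in \<open>auto intro: sum.neutral\<close>)
  also have "\<dots> = sum x I" by (rule sum.group) (use I in auto)
  finally show "sum x I = Sum_any (\<lambda>n. sum x {i\<in>I. d i = n})" by simp
qed

lemma gcomp_hom: "x \<in> gr d \<Longrightarrow> gcomp gr x = (\<lambda>n. if n = d then x else 0)"
  using gcomp_sum[of "{d}" "\<lambda>_. x" "\<lambda>_. d"] by (auto simp: fun_eq_iff)

lemma Xcoeff_sum:
  assumes I: "finite I" and x: "\<And>i. i \<in> I \<Longrightarrow> x i \<in> gr (d i)"
  shows "Xcoeff gr Y (sum x I) l w = (\<Sum>i\<in>I. Y (x i) (d i - l - 1) w)"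
proof -
  have e: "n \<notin> d ` I \<Longrightarrow> {i\<in>I. d i = n} = {}" for n by auto
  have "Xcoeff gr Y (sum x I) l w = Sum_any (\<lambda>n. Y (sum x {i\<in>I. d i = n}) (n - l - 1) w)"
    by (simp add: Xcoeff_def gcomp_sum[OF I x])
  also have "\<dots> = (\<Sum>n\<in>d ` I. Y (sum x {i\<in>I. d i = n}) (n - l - 1) w)"
    by (rule Sum_any_sup) (use I in \<open>auto simp: e\<close>)
  also have "\<dots> = (\<Sum>n\<in>d ` I. \<Sum>i\<in>{i\<in>I. d i = n}. Y (x i) (d i - l - 1) w)"
    by (intro sum.cong refl) (auto simp: YR_sum)
  also have "\<dots> = (\<Sum>i\<in>I. Y (x i) (d i - l - 1) w)" by (rule sum.group) (use I in auto)
  finally show ?thesis .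
qed

lemma Xcoeff_expand:
  assumes S: "finite S" "{n. gcomp gr v n \<noteq> 0} \<subseteq> S"
  shows "Xcoeff gr Y v l w = (\<Sum>n\<in>S. Y (gcomp gr v n) (n - l - 1) w)"
  unfolding Xcoeff_def
proof (rule Sum_any_sup)
  fix x assume "x \<notin> S"
  then have "gcomp gr v x = 0" using S by auto
  then show "Y (gcomp gr v x) (x - l - 1) w = 0" by simp
qed (use S in auto)

lemma Xcoeff_zero[simp]: "Xcoeff gr Y 0 l w = 0"
  using Xcoeff_sum[of "{}"] by simp

lemma jac: "jacobi_identity sc Y" using V by (simp add: VOA_def)
lemma L0: "v \<in> gr n \<Longrightarrow> Y omega 1 v = sc (of_int n) v" using V by (simp add: VOA_def)
lemma Lm1: "Y (Y omega 0 v) n w = sc (of_int (-n)) (Y v (n-1) w)" using V by (simp add: VOA_def)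

lemma gch_nat_zero: "p \<ge> 2 \<Longrightarrow> (of_int (p - 2) :: complex) gchoose nat p = 0"
proof -
  assume p: "p \<ge> 2"
  have "(of_int (p - 2) :: complex) = of_nat (nat (p - 2))" using p by simp
  then have "(of_int (p - 2) :: complex) gchoose nat p = of_nat (nat (p-2) choose nat p)"
    by (simp add: binomial_gbinomial)
  also have "\<dots> = 0" using p by (simp add: binomial_eq_0)
  finally show ?thesis .
qed

lemma dJ3_m2: "deltaJ3 (p,-2,r) = (if (p,r) = (0,1) \<or> (p,r) = (1,0) then 1 else 0)"
proof (cases "p \<ge> 2")
  case True
  have "(-(of_int r) - 1 :: complex) gchoose nat p = 0" if "p + r = 1"
  proof -
    have "- (of_int r :: complex) - 1 = of_int (p - 2)"
    proof -
      have r: "r = 1 - p" using that by simp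
      show ?thesis by (simp add: r)
    qed
    then show ?thesis by (simp only: gch_nat_zero[OF True])
  qed
  then show ?thesis using True by (auto simp: deltaJ3_def)
next
  case False
  then have "p < 0 \<or> p = 0 \<or> p = 1" by auto
  then show ?thesis by (auto simp: deltaJ3_def)
qed

lemma dJ1_m1: "deltaJ1 (-1,q,r) = (if (q,r) = (0,0) then 1 else 0)"
  by (auto simp: deltaJ1_def gbinomial_0_left)

lemma dJ2_m1: "deltaJ2 (-1,q,r) = (if (q,r) = (0,0) then 1 else 0)"
  by (auto simp: deltaJ2_def gbinomial_0_left)

lemma comm_L0:
  "Y omega 1 (Y v m w) - Y v m (Y omega 1 w) = Y (Y omega 0 v) (m+1) w + Y (Y omega 1 v) m w"
proof -
  define c where "c = -m-1"
  have J: "smul3 sc deltaJ1 (\<lambda>(i,j,l). if i = 0 then Y omega (-j-1) (Y v (-l-1) w) else 0) (-1,-2,c)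
    - smul3 sc deltaJ2 (\<lambda>(i,j,l). if i = 0 then Y v (-l-1) (Y omega (-j-1) w) else 0) (-1,-2,c)
    = smul3 sc deltaJ3 (\<lambda>(i,j,l). if j = 0 then Y (Y omega (-i-1) v) (-l-1) w else 0) (-1,-2,c)"
    using jac unfolding jacobi_identity_def by blast
  have 1: "smul3 sc deltaJ1 (\<lambda>(i,j,l). if i = 0 then Y omega (-j-1) (Y v (-l-1) w) else 0) (-1,-2,c)
     = Y omega 1 (Y v m w)"
    unfolding smul3_def prod.case
    apply (subst Sum_any_sup[where S="{(-1,0,0)}"])
    apply (auto simp: dJ1_m1 c_def split: if_split_asm)
    done
  have 2: "smul3 sc deltaJ2 (\<lambda>(i,j,l). if i = 0 then Y v (-l-1) (Y omega (-j-1) w) else 0) (-1,-2,c)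
     = Y v m (Y omega 1 w)"
    unfolding smul3_def prod.case
    apply (subst Sum_any_sup[where S="{(-1,0,0)}"])
    apply (auto simp: dJ2_m1 c_def split: if_split_asm)
    done
  have 3: "smul3 sc deltaJ3 (\<lambda>(i,j,l). if j = 0 then Y (Y omega (-i-1) v) (-l-1) w else 0) (-1,-2,c)
     = Y (Y omega 0 v) (m+1) w + Y (Y omega 1 v) m w"
    unfolding smul3_def prod.case
    apply (subst Sum_any_sup[where S="{(0,-2,1),(1,-2,0)}"])
    apply (auto simp: dJ3_m2 c_def add.commute split: if_split_asm)
    done
  show ?thesis using J 1 2 3 by simp
qed

lemma wt_mode:
  assumes x: "x \<in> gr n" and y: "y \<in> gr k"
  shows "Y omega 1 (Y x m y) = sc (of_int (n+k-m-1)) (Y x m y)"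
proof -
  have "Y omega 1 (Y x m y) = Y x m (Y omega 1 y) + Y (Y omega 0 x) (m+1) y + Y (Y omega 1 x) m y"
    using comm_L0[of x m y] by (simp add: algebra_simps)
  also have "\<dots> = sc (of_int k) (Y x m y) + sc (of_int (-(m+1))) (Y x m y) + sc (of_int n) (Y x m y)"
    by (simp add: L0[OF x] L0[OF y] Lm1 YL_scale YR_scale)
  also have "\<dots> = sc (of_int k + of_int (-(m+1)) + of_int n) (Y x m y)"
    by (simp add: scale_left_distrib)
  finally show ?thesis by (simp add: algebra_simps)
qed

lemma gcomp_zero: "gcomp gr 0 = (\<lambda>_. 0)"
  by (rule gcomp_unique) (auto intro: subspace_0[OF gr_sub])

lemma eigen_gr:
  assumes e: "Y omega 1 x = sc (of_int d) x"
  shows "x \<in> gr d"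
proof -
  define p where "p = gcomp gr x"
  define S where "S = {n. p n \<noteq> 0}"
  have fS: "finite S" unfolding S_def p_def by (rule gcomp_props)
  have pS: "n \<notin> S \<Longrightarrow> p n = 0" for n unfolding S_def by auto
  have pg: "p n \<in> gr n" for n unfolding p_def by (rule gcomp_props)
  have xs: "x = sum p S" unfolding S_def p_def
    using gcomp_props(3)[of x] Sum_any.expand_set by metis
  define q where "q n = sc (of_int n - of_int d) (p n)" for n
  have "sum q S = Y omega 1 x - sc (of_int d) x"
    unfolding q_def xs YL_sum scale_sum_right
    by (simp add: scale_left_diff_distrib L0[OF pg] sum_subtractf)
  then have q0: "sum q S = 0" using e by simp
  have "gcomp gr 0 = q"
  proof (rule gcomp_unique)
    show "finite {n. q n \<noteq> 0}"
      by (rule finite_subset[OF _ fS]) (use pS in \<open>force simp: q_def\<close>)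
    show "q n \<in> gr n" for n unfolding q_def by (rule subspace_scale[OF gr_sub pg])
    show "0 = Sum_any q" using q0 by (subst Sum_any_sup[OF fS]) (auto simp: q_def pS)
  qed
  then have qz: "q n = 0" for n using gcomp_zero by (metis)
  have pz: "p n = 0" if "n \<noteq> d" for n
  proof -
    have "(of_int n - of_int d :: complex) \<noteq> 0" using that by simp
    then have "p n = sc (inverse (of_int n - of_int d)) (q n)" by (simp add: q_def)
    then show ?thesis by (simp add: qz)
  qed
  have "x = Sum_any p" using xs fS pS Sum_any_sup by metis
  also have "\<dots> = sum p {d}" by (rule Sum_any_sup) (auto simp: pz)
  finally show ?thesis using pg by simp
qed

lemma Ygr: "x \<in> gr n \<Longrightarrow> y \<in> gr k \<Longrightarrow> Y x m y \<in> gr (n+k-m-1)"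
  by (rule eigen_gr, rule wt_mode)

lemma gr_scale: "x \<in> gr n \<Longrightarrow> sc c x \<in> gr n" by (rule subspace_scale[OF gr_sub])

lemma smul3_sum:
  assumes I: "finite I"
    and fin: "\<And>i. i \<in> I \<Longrightarrow> finite {x. (case x of (p,q,r) \<Rightarrow>
                 sc (f (p,q,r)) (h i (a-p, b-q - s i, c-r - t i))) \<noteq> 0}"
    and G: "\<And>x y z. G (x,y,z) = (\<Sum>i\<in>I. h i (x, y - s i, z - t i))"
  shows "smul3 sc f G (a,b,c) = (\<Sum>i\<in>I. smul3 sc f (h i) (a, b - s i, c - t i))"
proof -
  have "smul3 sc f G (a,b,c) = Sum_any (\<lambda>x. \<Sum>i\<in>I. (case x of (p,q,r) \<Rightarrow>
                 sc (f (p,q,r)) (h i (a-p, b-q - s i, c-r - t i))))"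
    unfolding smul3_def prod.case
    by (intro arg_cong[where f=Sum_any]) (auto simp: G scale_sum_right fun_eq_iff)
  also have "\<dots> = (\<Sum>i\<in>I. Sum_any (\<lambda>x. case x of (p,q,r) \<Rightarrow>
                 sc (f (p,q,r)) (h i (a-p, b-q - s i, c-r - t i))))"
    by (rule Sum_any_sum_swap[OF I fin])
  also have "\<dots> = (\<Sum>i\<in>I. smul3 sc f (h i) (a, b - s i, c - t i))"
    unfolding smul3_def prod.case
    by (intro sum.cong refl arg_cong[where f=Sum_any]) (auto simp: fun_eq_iff algebra_simps)
  finally show ?thesis .
qed

lemma fin_param:
  assumes "\<And>p q r. P (p,q,r) \<Longrightarrow> \<exists>t\<in>{lo..hi::int}. (p,q,r) = F t"
  shows "finite {x. P x}"
proof (rule finite_subset[of _ "F ` {lo..hi}"])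
  show "{x. P x} \<subseteq> F ` {lo..hi}" using assms by force
qed simp

lemma fin1:
  "finite {x. (case x of (p,q,r) \<Rightarrow> sc (deltaJ1 (p,q,r))
      ((\<lambda>(i,j,l). if i = 0 then Y xx (-j-1) (Y yy (-l-1) w) else 0) (a-p, b-q, c-r))) \<noteq> 0}"
proof -
  obtain N where N: "\<And>m. m \<ge> N \<Longrightarrow> Y yy m w = 0" using trunc by blast
  show ?thesis
  proof (rule fin_param[where lo=0 and hi="N+c" and F="\<lambda>r. (a, -a-1-r, r)"])
    fix p q r assume H: "(case (p,q,r) of (p,q,r) \<Rightarrow> sc (deltaJ1 (p,q,r))
      ((\<lambda>(i,j,l). if i = 0 then Y xx (-j-1) (Y yy (-l-1) w) else 0) (a-p, b-q, c-r))) \<noteq> 0"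
    then have d: "deltaJ1 (p,q,r) \<noteq> 0" and p: "p = a" and y: "Y yy (-(c-r)-1) w \<noteq> 0"
      by (auto split: if_splits)
    from d have "r \<ge> 0" "p + q + r = -1" by (auto simp: deltaJ1_def split: if_splits)
    moreover from y N have "-(c-r)-1 < N" by (meson not_le)
    ultimately show "\<exists>t\<in>{0..N+c}. (p,q,r) = (a, -a-1-t, t)" using p by auto
  qed
qed

lemma fin2:
  "finite {x. (case x of (p,q,r) \<Rightarrow> sc (deltaJ2 (p,q,r))
      ((\<lambda>(i,j,l). if i = 0 then Y yy (-l-1) (Y xx (-j-1) w) else 0) (a-p, b-q, c-r))) \<noteq> 0}"
proof -
  obtain N where N: "\<And>m. m \<ge> N \<Longrightarrow> Y xx m w = 0" using trunc by blast
  show ?thesis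
  proof (rule fin_param[where lo=0 and hi="N+b" and F="\<lambda>q. (a, q, -a-1-q)"])
    fix p q r assume H: "(case (p,q,r) of (p,q,r) \<Rightarrow> sc (deltaJ2 (p,q,r))
      ((\<lambda>(i,j,l). if i = 0 then Y yy (-l-1) (Y xx (-j-1) w) else 0) (a-p, b-q, c-r))) \<noteq> 0"
    then have d: "deltaJ2 (p,q,r) \<noteq> 0" and p: "p = a" and y: "Y xx (-(b-q)-1) w \<noteq> 0"
      by (auto split: if_splits)
    from d have "q \<ge> 0" "p + q + r = -1" by (auto simp: deltaJ2_def split: if_splits)
    moreover from y N have "-(b-q)-1 < N" by (meson not_le)
    ultimately show "\<exists>t\<in>{0..N+b}. (p,q,r) = (a, t, -a-1-t)" using p by auto
  qed
qed

lemma fin3: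
  "finite {x. (case x of (p,q,r) \<Rightarrow> sc (deltaJ3 (p,q,r))
      ((\<lambda>(i,j,l). if j = 0 then Y (Y xx (-i-1) yy) (-l-1) w else 0) (a-p, b-q, c-r))) \<noteq> 0}"
proof -
  obtain N where N: "\<And>m. m \<ge> N \<Longrightarrow> Y xx m yy = 0" using trunc by blast
  show ?thesis
  proof (rule fin_param[where lo=0 and hi="N+a" and F="\<lambda>p. (p, b, -1-p-b)"])
    fix p q r assume H: "(case (p,q,r) of (p,q,r) \<Rightarrow> sc (deltaJ3 (p,q,r))
      ((\<lambda>(i,j,l). if j = 0 then Y (Y xx (-i-1) yy) (-l-1) w else 0) (a-p, b-q, c-r))) \<noteq> 0"
    then have d: "deltaJ3 (p,q,r) \<noteq> 0" and q: "q = b" and y: "Y xx (-(a-p)-1) yy \<noteq> 0"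
      by (auto split: if_splits)
    from d have "p \<ge> 0" "p + q + r = -1" by (auto simp: deltaJ3_def split: if_splits)
    moreover from y N have "-(a-p)-1 < N" by (meson not_le)
    ultimately show "\<exists>t\<in>{0..N+a}. (p,q,r) = (t, b, -1-t-b)" using q by auto
  qed
qed

lemma jac_g: "smul3 sc deltaJ1 (g1 Y x y w) abc - smul3 sc deltaJ2 (g2 Y x y w) abc
   = smul3 sc deltaJ3 (g3 Y x y w) abc"
  using jac unfolding jacobi_identity_def g1_def g2_def g3_def by blast

lemma T1_dec:
  assumes fu: "finite Su" "{n. gcomp gr u n \<noteq> 0} \<subseteq> Su"
    and fv: "finite Sv" "{n. gcomp gr v n \<noteq> 0} \<subseteq> Sv"
  shows "smul3 sc deltaJ1 (\<lambda>(i,j,l). if i = 0 then Xcoeff gr Y u j (Xcoeff gr Y v l w) else 0) (a,b,c)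
     = (\<Sum>i\<in>Su\<times>Sv. smul3 sc deltaJ1 (g1 Y (gcomp gr u (fst i)) (gcomp gr v (snd i)) w)
           (a, b - fst i, c - snd i))"
proof (rule smul3_sum)
  show "finite (Su \<times> Sv)" using fu fv by simp
  show "finite {x. (case x of (p,q,r) \<Rightarrow> sc (deltaJ1 (p,q,r))
     (g1 Y (gcomp gr u (fst i)) (gcomp gr v (snd i)) w (a-p, b-q - fst i, c-r - snd i))) \<noteq> 0}" for i
    using fin1[where xx="gcomp gr u (fst i)" and yy="gcomp gr v (snd i)" and a=a and b="b - fst i" and c="c - snd i"]
    unfolding g1_def by (simp add: algebra_simps)
  fix x y z
  show "(case (x,y,z) of (i,j,l) \<Rightarrow> if i = 0 then Xcoeff gr Y u j (Xcoeff gr Y v l w) else 0)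
     = (\<Sum>i\<in>Su\<times>Sv. g1 Y (gcomp gr u (fst i)) (gcomp gr v (snd i)) w (x, y - fst i, z - snd i))"
  proof (cases "x = 0")
    case True
    have "Xcoeff gr Y u y (Xcoeff gr Y v z w)
       = (\<Sum>n\<in>Su. \<Sum>k\<in>Sv. Y (gcomp gr u n) (n - y - 1) (Y (gcomp gr v k) (k - z - 1) w))"
      by (simp add: Xcoeff_expand[OF fu] Xcoeff_expand[OF fv] YL_sum)
    also have "\<dots> = (\<Sum>i\<in>Su\<times>Sv. Y (gcomp gr u (fst i)) (fst i - y - 1) (Y (gcomp gr v (snd i)) (snd i - z - 1) w))"
      by (simp add: sum.cartesian_product split_def)
    finally show ?thesis using True by (simp add: g1_def algebra_simps)
  qed (simp add: g1_def)
qed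

lemma T2_dec:
  assumes fu: "finite Su" "{n. gcomp gr u n \<noteq> 0} \<subseteq> Su"
    and fv: "finite Sv" "{n. gcomp gr v n \<noteq> 0} \<subseteq> Sv"
  shows "smul3 sc deltaJ2 (\<lambda>(i,j,l). if i = 0 then Xcoeff gr Y v l (Xcoeff gr Y u j w) else 0) (a,b,c)
     = (\<Sum>i\<in>Su\<times>Sv. smul3 sc deltaJ2 (g2 Y (gcomp gr u (fst i)) (gcomp gr v (snd i)) w)
           (a, b - fst i, c - snd i))"
proof (rule smul3_sum)
  show "finite (Su \<times> Sv)" using fu fv by simp
  show "finite {x. (case x of (p,q,r) \<Rightarrow> sc (deltaJ2 (p,q,r))
     (g2 Y (gcomp gr u (fst i)) (gcomp gr v (snd i)) w (a-p, b-q - fst i, c-r - snd i))) \<noteq> 0}" for i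
    using fin2[where yy="gcomp gr v (snd i)" and xx="gcomp gr u (fst i)" and a=a and b="b - fst i" and c="c - snd i"]
    unfolding g2_def by (simp add: algebra_simps)
  fix x y z
  show "(case (x,y,z) of (i,j,l) \<Rightarrow> if i = 0 then Xcoeff gr Y v l (Xcoeff gr Y u j w) else 0)
     = (\<Sum>i\<in>Su\<times>Sv. g2 Y (gcomp gr u (fst i)) (gcomp gr v (snd i)) w (x, y - fst i, z - snd i))"
  proof (cases "x = 0")
    case True
    have "Xcoeff gr Y v z (Xcoeff gr Y u y w)
       = (\<Sum>k\<in>Sv. \<Sum>n\<in>Su. Y (gcomp gr v k) (k - z - 1) (Y (gcomp gr u n) (n - y - 1) w))"
      by (simp add: Xcoeff_expand[OF fu] Xcoeff_expand[OF fv] YL_sum)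
    also have "\<dots> = (\<Sum>i\<in>Su\<times>Sv. Y (gcomp gr v (snd i)) (snd i - z - 1) (Y (gcomp gr u (fst i)) (fst i - y - 1) w))"
      by (subst sum.swap) (simp add: sum.cartesian_product split_def)
    finally show ?thesis using True by (simp add: g2_def algebra_simps)
  qed (simp add: g2_def)
qed

lemma zhu_alt: "zhuY_my01 sc gr Y u v i =
   Sum_any (\<lambda>(n,m). sc (zc (m+1-n) (i+m+1)) (Y (gcomp gr u n) m v))"
  unfolding zhuY_my01_def using zhu_coef by presburger

lemma decomp_sum:
  assumes "finite Sv" "{n. gcomp gr v n \<noteq> 0} \<subseteq> Sv"
  shows "v = (\<Sum>k\<in>Sv. gcomp gr v k)"
  using gcomp_props(3)[of v] Sum_any_sup[OF assms(1), of "gcomp gr v"] assms(2) by auto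

lemma zhu_expand:
  assumes fu: "finite Su" "{n. gcomp gr u n \<noteq> 0} \<subseteq> Su"
    and fv: "finite Sv" "{n. gcomp gr v n \<noteq> 0} \<subseteq> Sv"
    and M: "finite M"
    and hyp: "\<And>n m. n \<in> Su \<Longrightarrow> m \<notin> M \<Longrightarrow> Y (gcomp gr u n) m v = 0 \<or> zc (m+1-n) (i+m+1) = 0"
  shows "zhuY_my01 sc gr Y u v i = (\<Sum>x\<in>Su\<times>M\<times>Sv. case x of (n,m,k) \<Rightarrow>
            sc (zc (m+1-n) (i+m+1)) (Y (gcomp gr u n) m (gcomp gr v k)))"
proof -
  have "zhuY_my01 sc gr Y u v i = (\<Sum>x\<in>Su\<times>M. case x of (n,m) \<Rightarrow> sc (zc (m+1-n) (i+m+1)) (Y (gcomp gr u n) m v))"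
    unfolding zhu_alt
  proof (rule Sum_any_sup)
    fix x assume x: "x \<notin> Su \<times> M"
    obtain n m where xe: "x = (n,m)" by fastforce
    show "(case x of (n, m) \<Rightarrow> sc (zc (m + 1 - n) (i + m + 1)) (Y (gcomp gr u n) m v)) = 0"
    proof (cases "n \<in> Su")
      case True
      then have "m \<notin> M" using x xe by auto
      then show ?thesis using hyp[OF True] xe by auto
    next
      case False
      then have "gcomp gr u n = 0" using fu by auto
      then show ?thesis using xe by simp
    qed
  qed (use fu M in simp)
  also have "\<dots> = (\<Sum>x\<in>Su\<times>M. \<Sum>k\<in>Sv. case x of (n,m) \<Rightarrow> sc (zc (m+1-n) (i+m+1)) (Y (gcomp gr u n) m (gcomp gr v k)))"
  proof (intro sum.cong refl)
    have vd: "Y x m v = (\<Sum>k\<in>Sv. Y x m (gcomp gr v k))" for x m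
      by (subst YL_sum[symmetric]) (rule arg_cong[OF decomp_sum[OF fv]])
    fix x show "(case x of (n,m) \<Rightarrow> sc (zc (m+1-n) (i+m+1)) (Y (gcomp gr u n) m v)) =
      (\<Sum>k\<in>Sv. case x of (n,m) \<Rightarrow> sc (zc (m+1-n) (i+m+1)) (Y (gcomp gr u n) m (gcomp gr v k)))"
      by (auto simp: vd scale_sum_right split: prod.splits)
  qed
  also have "\<dots> = (\<Sum>x\<in>Su\<times>M\<times>Sv. case x of (n,m,k) \<Rightarrow>
            sc (zc (m+1-n) (i+m+1)) (Y (gcomp gr u n) m (gcomp gr v k)))"
    apply (simp add: sum.cartesian_product split_def)
    apply (rule sum.reindex_bij_witness[of _ "\<lambda>(n,m,k). ((n,m),k)" "\<lambda>((n,m),k). (n,m,k)"])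
    apply auto
    done
  finally show ?thesis .
qed

lemma Xcoeff_zhu:
  assumes fu: "finite Su" "{n. gcomp gr u n \<noteq> 0} \<subseteq> Su"
    and fv: "finite Sv" "{n. gcomp gr v n \<noteq> 0} \<subseteq> Sv"
    and M: "finite M"
    and hyp: "\<And>n m. n \<in> Su \<Longrightarrow> m \<notin> M \<Longrightarrow> Y (gcomp gr u n) m v = 0 \<or> zc (m+1-n) (i+m+1) = 0"
  shows "Xcoeff gr Y (zhuY_my01 sc gr Y u v i) l w = (\<Sum>x\<in>Su\<times>M\<times>Sv. case x of (n,m,k) \<Rightarrow>
            sc (zc (m+1-n) (i+m+1)) (Y (Y (gcomp gr u n) m (gcomp gr v k)) (n+k-m-1-l-1) w))"
proof -
  have "Xcoeff gr Y (zhuY_my01 sc gr Y u v i) l w =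
    Xcoeff gr Y (\<Sum>x\<in>Su\<times>M\<times>Sv. case x of (n,m,k) \<Rightarrow>
            sc (zc (m+1-n) (i+m+1)) (Y (gcomp gr u n) m (gcomp gr v k))) l w"
    by (rule arg_cong[where f="\<lambda>z. Xcoeff gr Y z l w"], rule zhu_expand[OF fu fv M hyp])
  also have "\<dots> = (\<Sum>x\<in>Su\<times>M\<times>Sv. Y (case x of (n,m,k) \<Rightarrow>
            sc (zc (m+1-n) (i+m+1)) (Y (gcomp gr u n) m (gcomp gr v k))) ((\<lambda>(n,m,k). n+k-m-1) x - l - 1) w)"
    by (rule Xcoeff_sum) (auto simp: fu fv M intro!: gr_scale Ygr gcomp_props)
  also have "\<dots> = (\<Sum>x\<in>Su\<times>M\<times>Sv. case x of (n,m,k) \<Rightarrow>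
            sc (zc (m+1-n) (i+m+1)) (Y (Y (gcomp gr u n) m (gcomp gr v k)) (n+k-m-1-l-1) w))"
    by (intro sum.cong refl) (auto simp: YR_scale)
  finally show ?thesis .
qed

lemma J3_calc:
  assumes N: "\<And>m. m \<ge> Nb \<Longrightarrow> Y x m y = 0"
  shows "smul3 sc deltaJ3 (g3 Y x y w) (a, b', c') =
    (\<Sum>m\<in>{-a-1..<Nb}. sc (zc (a+b'+m+1) (a+m+1)) (Y (Y x m y) (-(c'+a+m+b'+2)-1) w))"
proof -
  let ?F = "\<lambda>m. (a+m+1, b', -1-(a+m+1)-b')"
  have "smul3 sc deltaJ3 (g3 Y x y w) (a, b', c') = (\<Sum>t\<in>?F ` {-a-1..<Nb}.
     (case t of (p,q,r) \<Rightarrow> sc (deltaJ3 (p,q,r)) (g3 Y x y w (a-p, b'-q, c'-r))))"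
    unfolding smul3_def prod.case
  proof (rule Sum_any_sup)
    fix t assume t: "t \<notin> ?F ` {-a-1..<Nb}"
    obtain p q r where te: "t = (p,q,r)" by (cases t) auto
    show "(case t of (p,q,r) \<Rightarrow> sc (deltaJ3 (p,q,r)) (g3 Y x y w (a-p, b'-q, c'-r))) = 0"
    proof (rule ccontr)
      assume H: "(case t of (p,q,r) \<Rightarrow> sc (deltaJ3 (p,q,r)) (g3 Y x y w (a-p, b'-q, c'-r))) \<noteq> 0"
      then have d: "deltaJ3 (p,q,r) \<noteq> 0" and q: "q = b'" and yy: "Y x (-(a-p)-1) y \<noteq> 0"
        using te by (auto simp: g3_def split: if_splits)
      from d have "p \<ge> 0" "p + q + r = -1" by (auto simp: deltaJ3_def split: if_splits)
      moreover from yy N have "-(a-p)-1 < Nb" by (meson not_le)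
      ultimately have "t = ?F (p-a-1)" "p-a-1 \<in> {-a-1..<Nb}" using te q by auto
      then show False using t by blast
    qed
  qed simp
  also have "\<dots> = (\<Sum>m\<in>{-a-1..<Nb}. (case ?F m of (p,q,r) \<Rightarrow> sc (deltaJ3 (p,q,r)) (g3 Y x y w (a-p, b'-q, c'-r))))"
    by (subst sum.reindex) (auto simp: inj_on_def)
  also have "\<dots> = (\<Sum>m\<in>{-a-1..<Nb}. sc (zc (a+b'+m+1) (a+m+1)) (Y (Y x m y) (-(c'+a+m+b'+2)-1) w))"
  proof (intro sum.cong refl)
    fix m assume m: "m \<in> {-a-1..<Nb}"
    have "deltaJ3 (?F m) = zc (a+b'+m+1) (a+m+1)"
      using m by (simp add: deltaJ3_def zc_def algebra_simps)
    moreover have "g3 Y x y w (a-(a+m+1), b'-b', c'-(-1-(a+m+1)-b')) = Y (Y x m y) (-(c'+a+m+b'+2)-1) w"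
      by (simp add: g3_def algebra_simps)
    ultimately show "(case ?F m of (p,q,r) \<Rightarrow> sc (deltaJ3 (p,q,r)) (g3 Y x y w (a-p, b'-q, c'-r)))
       = sc (zc (a+b'+m+1) (a+m+1)) (Y (Y x m y) (-(c'+a+m+b'+2)-1) w)" by simp
  qed
  finally show ?thesis .
qed

lemma zc_conv2:
  assumes K: "0 \<le> K" "K \<le> L"
  shows "(\<Sum>p\<in>{0..L}. zc A p * zc B (K - p)) = zc (A + B) K"
proof -
  have "(\<Sum>p\<in>{0..L}. zc A p * zc B (K - p)) = (\<Sum>p\<in>{0..K}. zc A p * zc B (K - p))"
    by (rule sum.mono_neutral_right) (use K in \<open>auto simp: zc_neg\<close>)
  also have "\<dots> = zc (A + B) K" using K by (simp add: zc_conv)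
  finally show ?thesis .
qed

lemma T3_calc:
  assumes fu: "finite Su" "{n. gcomp gr u n \<noteq> 0} \<subseteq> Su"
    and fv: "finite Sv" "{n. gcomp gr v n \<noteq> 0} \<subseteq> Sv"
    and Nb: "\<And>n k m. n \<in> Su \<Longrightarrow> k \<in> Sv \<Longrightarrow> m \<ge> Nb \<Longrightarrow> Y (gcomp gr u n) m (gcomp gr v k) = 0"
  shows "smul3 sc deltaJ3 (\<lambda>(i,j,l). if j = - i then Xcoeff gr Y (zhuY_my01 sc gr Y u v i) l w else 0) (a,b,c)
    = (\<Sum>x\<in>Su\<times>{-a-1..<Nb}\<times>Sv. case x of (n,m,k) \<Rightarrow>
         sc (zc (a+b-n+m+1) (a+m+1)) (Y (Y (gcomp gr u n) m (gcomp gr v k)) (n+k-m-a-b-c-3) w))"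
proof -
  define M where "M = {-a-1..<Nb}"
  define P where "P = {0..a+Nb}"
  have fM: "finite M" by (simp add: M_def)
  have Yv0: "Y (gcomp gr u n) m v = 0" if "n \<in> Su" "m \<ge> Nb" for n m
    by (subst arg_cong[OF decomp_sum[OF fv]]) (simp add: YL_sum Nb that)
  have zhu0: "zhuY_my01 sc gr Y u v i = 0" if i: "i < -Nb" for i
  proof -
    have "(\<lambda>(n,m). sc (zc (m+1-n) (i+m+1)) (Y (gcomp gr u n) m v)) = (\<lambda>_. 0)"
    proof (rule ext, clarify)
      fix n m
      show "sc (zc (m+1-n) (i+m+1)) (Y (gcomp gr u n) m v) = 0"
      proof (cases "n \<in> Su")
        case False then have "gcomp gr u n = 0" using fu by auto
        then show ?thesis by simp
      next
        case True
        show ?thesis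
        proof (cases "m \<ge> Nb")
          case True2: True
          then show ?thesis using Yv0[OF True True2] by simp
        next
          case False then show ?thesis using i by (simp add: zc_neg)
        qed
      qed
    qed
    then show ?thesis by (simp add: zhu_alt)
  qed
  define G where "G = (\<lambda>(i,j,l). if j = - i then Xcoeff gr Y (zhuY_my01 sc gr Y u v i) l w else 0)"
  let ?F = "\<lambda>p. (p, a+b-p, -1-a-b)"
  have "smul3 sc deltaJ3 G (a,b,c) = (\<Sum>t\<in>?F ` P.
     (case t of (p,q,r) \<Rightarrow> sc (deltaJ3 (p,q,r)) (G (a-p, b-q, c-r))))"
    unfolding smul3_def prod.case
  proof (rule Sum_any_sup)
    fix t assume t: "t \<notin> ?F ` P"
    obtain p q r where te: "t = (p,q,r)" by (cases t) auto
    show "(case t of (p,q,r) \<Rightarrow> sc (deltaJ3 (p,q,r)) (G (a-p, b-q, c-r))) = 0"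
    proof (rule ccontr)
      assume H: "(case t of (p,q,r) \<Rightarrow> sc (deltaJ3 (p,q,r)) (G (a-p, b-q, c-r))) \<noteq> 0"
      then have d: "deltaJ3 (p,q,r) \<noteq> 0" and q: "b - q = -(a-p)"
        and X: "Xcoeff gr Y (zhuY_my01 sc gr Y u v (a-p)) (c-r) w \<noteq> 0"
        using te by (auto simp: G_def split: if_splits)
      from d have p0: "p \<ge> 0" and s: "p + q + r = -1" by (auto simp: deltaJ3_def split: if_splits)
      have "p \<le> a + Nb"
      proof (rule ccontr)
        assume "\<not> p \<le> a + Nb"
        then have "zhuY_my01 sc gr Y u v (a-p) = 0" by (intro zhu0) simp
        then show False using X by simp
      qed
      then have "t = ?F p" "p \<in> P" using te q s p0 by (auto simp: P_def)
      then show False using t by blast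
    qed
  qed (simp add: P_def)
  also have "\<dots> = (\<Sum>p\<in>P. sc (zc (a+b) p) (Xcoeff gr Y (zhuY_my01 sc gr Y u v (a-p)) (c+1+a+b) w))"
  proof (subst sum.reindex)
    show "inj_on ?F P" by (simp add: inj_on_def)
    show "sum ((\<lambda>t. case t of (p,q,r) \<Rightarrow> sc (deltaJ3 (p,q,r)) (G (a-p, b-q, c-r))) \<circ> ?F) P =
      (\<Sum>p\<in>P. sc (zc (a+b) p) (Xcoeff gr Y (zhuY_my01 sc gr Y u v (a-p)) (c+1+a+b) w))"
    proof (intro sum.cong refl)
      fix p assume p: "p \<in> P"
      have e1: "deltaJ3 (p, a+b-p, -1-a-b) = zc (a+b) p"
        using p by (simp add: P_def deltaJ3_def zc_def add.commute)
      have e2: "c - (-1-a-b) = c+1+a+b" "b - (a+b-p) = - (a - p)" by simp_all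
      show "((\<lambda>t. case t of (p,q,r) \<Rightarrow> sc (deltaJ3 (p,q,r)) (G (a-p, b-q, c-r))) \<circ> ?F) p =
        sc (zc (a+b) p) (Xcoeff gr Y (zhuY_my01 sc gr Y u v (a-p)) (c+1+a+b) w)"
        by (simp only: o_apply prod.case e1 e2 G_def) simp
    qed
  qed
  also have "\<dots> = (\<Sum>p\<in>P. sc (zc (a+b) p) (\<Sum>x\<in>Su\<times>M\<times>Sv. case x of (n,m,k) \<Rightarrow>
            sc (zc (m+1-n) ((a-p)+m+1)) (Y (Y (gcomp gr u n) m (gcomp gr v k)) (n+k-m-1-(c+1+a+b)-1) w)))"
  proof (intro sum.cong refl arg_cong2[where f=sc])
    fix p assume p: "p \<in> P"
    show "Xcoeff gr Y (zhuY_my01 sc gr Y u v (a-p)) (c+1+a+b) w = (\<Sum>x\<in>Su\<times>M\<times>Sv. case x of (n,m,k) \<Rightarrow>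
            sc (zc (m+1-n) ((a-p)+m+1)) (Y (Y (gcomp gr u n) m (gcomp gr v k)) (n+k-m-1-(c+1+a+b)-1) w))"
    proof (rule Xcoeff_zhu[OF fu fv fM])
      fix n m assume n: "n \<in> Su" and m: "m \<notin> M"
      show "Y (gcomp gr u n) m v = 0 \<or> zc (m+1-n) ((a-p)+m+1) = 0"
      proof (cases "m \<ge> Nb")
        case True then show ?thesis using Yv0[OF n] by simp
      next
        case False then have "m < -a-1" using m by (auto simp: M_def)
        then show ?thesis using p by (auto simp: P_def zc_neg)
      qed
    qed
  qed
  also have "\<dots> = (\<Sum>x\<in>Su\<times>M\<times>Sv. \<Sum>p\<in>P. case x of (n,m,k) \<Rightarrow>
        sc (zc (a+b) p * zc (m+1-n) ((a+m+1) - p)) (Y (Y (gcomp gr u n) m (gcomp gr v k)) (n+k-m-a-b-c-3) w))"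
    by (subst sum.swap) (auto simp: scale_sum_right algebra_simps intro!: sum.cong split: prod.splits)
  also have "\<dots> = (\<Sum>x\<in>Su\<times>M\<times>Sv. case x of (n,m,k) \<Rightarrow>
        sc (\<Sum>p\<in>P. zc (a+b) p * zc (m+1-n) ((a+m+1) - p)) (Y (Y (gcomp gr u n) m (gcomp gr v k)) (n+k-m-a-b-c-3) w))"
    by (intro sum.cong refl) (auto simp: scale_sum_left split: prod.splits)
  also have "\<dots> = (\<Sum>x\<in>Su\<times>M\<times>Sv. case x of (n,m,k) \<Rightarrow>
         sc (zc (a+b-n+m+1) (a+m+1)) (Y (Y (gcomp gr u n) m (gcomp gr v k)) (n+k-m-a-b-c-3) w))"
  proof (intro sum.cong refl, clarify)
    fix n m k assume "m \<in> M"
    then have "0 \<le> a+m+1" "a+m+1 \<le> a+Nb" by (auto simp: M_def)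
    then have "(\<Sum>p\<in>P. zc (a+b) p * zc (m+1-n) ((a+m+1) - p)) = zc (a+b + (m+1-n)) (a+m+1)"
      unfolding P_def by (rule zc_conv2)
    then show "sc (\<Sum>p\<in>P. zc (a+b) p * zc (m+1-n) ((a+m+1) - p)) (Y (Y (gcomp gr u n) m (gcomp gr v k)) (n+k-m-a-b-c-3) w)
      = sc (zc (a+b-n+m+1) (a+m+1)) (Y (Y (gcomp gr u n) m (gcomp gr v k)) (n+k-m-a-b-c-3) w)"
      by (simp add: algebra_simps)
  qed
  finally show ?thesis unfolding M_def G_def .
qed

lemma trunc_uniform:
  assumes "finite A"
  shows "\<exists>N. \<forall>x\<in>A. \<forall>m\<ge>N. Y (fst x) m (snd x) = 0"
  using assms
proof (induction A rule: finite_induct)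
  case empty then show ?case by simp
next
  case (insert x A)
  then obtain N1 where N1: "\<forall>x\<in>A. \<forall>m\<ge>N1. Y (fst x) m (snd x) = 0" by blast
  obtain N2 where N2: "\<forall>m\<ge>N2. Y (fst x) m (snd x) = 0" using trunc by blast
  show ?case by (rule exI[of _ "max N1 N2"]) (use N1 N2 in auto)
qed

lemma main:
  "smul3 sc deltaA (\<lambda>(i,j,l). if i = 0 then Xcoeff gr Y u j (Xcoeff gr Y v l w) else 0) abc
       - smul3 sc deltaB (\<lambda>(i,j,l). if i = 0 then Xcoeff gr Y v l (Xcoeff gr Y u j w) else 0) abc
       = smul3 sc deltaC (\<lambda>(i,j,l). if j = - i then Xcoeff gr Y (zhuY_my01 sc gr Y u v i) l w else 0) abc"
proof -
  obtain a b c where abc: "abc = (a,b,c)" by (cases abc) auto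
  define Su where "Su = {n. gcomp gr u n \<noteq> 0}"
  define Sv where "Sv = {n. gcomp gr v n \<noteq> 0}"
  have fu: "finite Su" "{n. gcomp gr u n \<noteq> 0} \<subseteq> Su" by (simp_all add: Su_def gcomp_props)
  have fv: "finite Sv" "{n. gcomp gr v n \<noteq> 0} \<subseteq> Sv" by (simp_all add: Sv_def gcomp_props)
  obtain Nb where Nb0: "\<forall>x\<in>(\<lambda>(n,k). (gcomp gr u n, gcomp gr v k)) ` (Su\<times>Sv). \<forall>m\<ge>Nb. Y (fst x) m (snd x) = 0"
    using trunc_uniform[of "(\<lambda>(n,k). (gcomp gr u n, gcomp gr v k)) ` (Su\<times>Sv)"] fu fv by auto
  have Nb: "\<And>n k m. n \<in> Su \<Longrightarrow> k \<in> Sv \<Longrightarrow> m \<ge> Nb \<Longrightarrow> Y (gcomp gr u n) m (gcomp gr v k) = 0"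
    using Nb0 by fastforce
  define M where "M = {-a-1..<Nb}"
  define E where "E = (\<lambda>(n,m,k). sc (zc (a+b-n+m+1) (a+m+1)) (Y (Y (gcomp gr u n) m (gcomp gr v k)) (n+k-m-a-b-c-3) w))"
  have "smul3 sc deltaA (\<lambda>(i,j,l). if i = 0 then Xcoeff gr Y u j (Xcoeff gr Y v l w) else 0) (a,b,c)
       - smul3 sc deltaB (\<lambda>(i,j,l). if i = 0 then Xcoeff gr Y v l (Xcoeff gr Y u j w) else 0) (a,b,c)
     = (\<Sum>i\<in>Su\<times>Sv. smul3 sc deltaJ1 (g1 Y (gcomp gr u (fst i)) (gcomp gr v (snd i)) w) (a, b - fst i, c - snd i)
          - smul3 sc deltaJ2 (g2 Y (gcomp gr u (fst i)) (gcomp gr v (snd i)) w) (a, b - fst i, c - snd i))"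
    unfolding deltaA_eq deltaB_eq T1_dec[OF fu fv] T2_dec[OF fu fv] by (simp add: sum_subtractf)
  also have "\<dots> = (\<Sum>i\<in>Su\<times>Sv. smul3 sc deltaJ3 (g3 Y (gcomp gr u (fst i)) (gcomp gr v (snd i)) w) (a, b - fst i, c - snd i))"
    by (simp add: jac_g)
  also have "\<dots> = (\<Sum>i\<in>Su\<times>Sv. \<Sum>m\<in>M. E (fst i, m, snd i))"
  proof (intro sum.cong refl)
    fix i assume i: "i \<in> Su\<times>Sv"
    have "smul3 sc deltaJ3 (g3 Y (gcomp gr u (fst i)) (gcomp gr v (snd i)) w) (a, b - fst i, c - snd i)
      = (\<Sum>m\<in>{-a-1..<Nb}. sc (zc (a+(b - fst i)+m+1) (a+m+1))
          (Y (Y (gcomp gr u (fst i)) m (gcomp gr v (snd i))) (-((c - snd i)+a+m+(b - fst i)+2)-1) w))"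
      by (rule J3_calc) (use i Nb in auto)
    also have "\<dots> = (\<Sum>m\<in>M. E (fst i, m, snd i))"
      unfolding M_def E_def by (intro sum.cong refl) (simp add: algebra_simps)
    finally show "smul3 sc deltaJ3 (g3 Y (gcomp gr u (fst i)) (gcomp gr v (snd i)) w) (a, b - fst i, c - snd i)
      = (\<Sum>m\<in>M. E (fst i, m, snd i))" .
  qed
  also have "\<dots> = (\<Sum>x\<in>Su\<times>M\<times>Sv. E x)"
    apply (simp add: sum.cartesian_product split_def)
    apply (rule sum.reindex_bij_witness[of _ "\<lambda>(n,m,k). ((n,k),m)" "\<lambda>((n,k),m). (n,m,k)"])
    apply auto
    done
  also have "\<dots> = smul3 sc deltaC (\<lambda>(i,j,l). if j = - i then Xcoeff gr Y (zhuY_my01 sc gr Y u v i) l w else 0) (a,b,c)"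
    unfolding deltaC_eq M_def E_def by (rule T3_calc[OF fu fv Nb, symmetric])
  finally show ?thesis unfolding abc .
qed

end

theorem theorem4p2:
  fixes sc :: "complex \<Rightarrow> 'v::ab_group_add \<Rightarrow> 'v"
    and gr :: "int \<Rightarrow> 'v set" and Y :: "'v \<Rightarrow> int \<Rightarrow> 'v \<Rightarrow> 'v"
    and one omega :: 'v and crank :: complex
    and u v w :: 'v and abc :: "int \<times> int \<times> int"
  assumes "VOA sc gr Y one omega crank"
  shows "smul3 sc deltaA (\<lambda>(i,j,l). if i = 0 then Xcoeff gr Y u j (Xcoeff gr Y v l w) else 0) abc
       - smul3 sc deltaB (\<lambda>(i,j,l). if i = 0 then Xcoeff gr Y v l (Xcoeff gr Y u j w) else 0) abc
       = smul3 sc deltaC (\<lambda>(i,j,l). if j = - i then Xcoeff gr Y (zhuY_my01 sc gr Y u v i) l w else 0) abc"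
proof -
  interpret voa sc gr Y one omega crank by (rule voa.intro) (rule assms)
  show ?thesis by (rule main)
qed


end
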